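(* Let $A$ be a row-finite $\omega\times\omega$ complex matrix, $g\in\mathbb{C}^{\omega}$, and let $Q$ be a nonsingular row-finite matrix such that $H=QA=(h_{ij})$ is in quasi-Hermite form. Let $W$ be the set of indices of zero rows of $H$, $J=\{j_0<j_1<\cdots\}=\omega\setminus W$ the indices of nonzero rows, $\mu_i=\ell(H_{j_i})$, and $\mathbf{k}=Qg$. Then: (a) the system $Ay=g$ (with unknown $y\in\mathbb{C}^\omega$) has a solution if and only if $\mathbf{k}_w=0$ for all $w\in W$; (b) in that case, $y\in\mathbb{C}^{\omega}$ solves $Ay=g$ if and only if for every $i$ with $j_i\in J$, $$y_{\mu_i}=\mathbf{k}_{j_i}-\sum_{k=0}^{\mu_i-1}h_{j_ik}y_k,$$ where the coordinates $y_s$, $s\in\omega\setminus\{\mu_0,\mu_1,\dots\}$, are arbitrary (and only these occur with possibly nonzero coefficients in the sums). In particular the homogeneous system $Ay=0$ has a nontrivial solution if and only if $\operatorname{def}(A)>0$.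
   Context: $\omega=\{0,1,2,\dots\}$; $\mathbb{C}^{\omega}$ is the space of all complex sequences (written as columns); for a row-finite matrix $A$, $(Ay)_n=\sum_k a_{nk}y_k$ (a finite sum). Row-finite: each row has finitely many nonzero entries; nonsingular: invertible in the algebra of row-finite matrices. Length $\ell(x)$ of a finitely supported sequence $x\neq 0$ is its largest index with nonzero coordinate. Quasi-Hermite form (QHF): with $J$ the indices of nonzero rows and $\ell_j=\ell(H_j)$, (i) $j<j'$ in $J$ implies $\ell_j<\ell_{j'}$; (ii) $h_{j\ell_j}=1$; (iii) $h_{m\ell_j}=0$ for all $m\neq j$. $\operatorname{def}(A)$ is the codimension of the row space of $A$ in the space of finitely supported sequences. *)

theory Defs
  imports Complex_Main "HOL-Library.Extended_Nat"
begin

type_synonym cmat = "nat \<Rightarrow> nat \<Rightarrow> complex"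
type_synonym cseq = "nat \<Rightarrow> complex"

definition row_finite :: "cmat \<Rightarrow> bool" where
  "row_finite A \<longleftrightarrow> (\<forall>i. finite {k. A i k \<noteq> 0})"

definition mat_vec :: "cmat \<Rightarrow> cseq \<Rightarrow> cseq" where
  "mat_vec A y = (\<lambda>n. \<Sum>k\<in>{k. A n k \<noteq> 0}. A n k * y k)"

definition mat_mult :: "cmat \<Rightarrow> cmat \<Rightarrow> cmat" where
  "mat_mult A B = (\<lambda>i k. \<Sum>j\<in>{j. A i j \<noteq> 0}. A i j * B j k)"

definition id_mat :: cmat where
  "id_mat = (\<lambda>i k. if i = k then 1 else 0)"

definition nonsingular :: "cmat \<Rightarrow> bool" where
  "nonsingular Q \<longleftrightarrow> row_finite Q \<and>
     (\<exists>R. row_finite R \<and> mat_mult Q R = id_mat \<and> mat_mult R Q = id_mat)"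

definition fin_supp :: "cseq set" where
  "fin_supp = {x. finite {k. x k \<noteq> 0}}"

text \<open>Length of a finitely supported nonzero sequence: largest index with nonzero coordinate.\<close>
definition seq_len :: "cseq \<Rightarrow> nat" where
  "seq_len x = Max {k. x k \<noteq> 0}"

definition zero_rows :: "cmat \<Rightarrow> nat set" where
  "zero_rows H = {j. H j = (\<lambda>_. 0)}"

definition nonzero_rows :: "cmat \<Rightarrow> nat set" where
  "nonzero_rows H = {j. H j \<noteq> (\<lambda>_. 0)}"

definition quasi_hermite :: "cmat \<Rightarrow> bool" where
  "quasi_hermite H \<longleftrightarrow> row_finite H \<and>
     (\<forall>j\<in>nonzero_rows H. \<forall>j'\<in>nonzero_rows H. j < j' \<longrightarrow> seq_len (H j) < seq_len (H j')) \<and>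
     (\<forall>j\<in>nonzero_rows H. H j (seq_len (H j)) = 1) \<and>
     (\<forall>j\<in>nonzero_rows H. \<forall>m. m \<noteq> j \<longrightarrow> H m (seq_len (H j)) = 0)"

definition lin_span :: "cseq set \<Rightarrow> cseq set" where
  "lin_span V = {x. \<exists>F c. finite F \<and> F \<subseteq> V \<and> x = (\<lambda>k. \<Sum>v\<in>F. c v * v k)}"

definition row_space :: "cmat \<Rightarrow> cseq set" where
  "row_space A = lin_span (range A)"

text \<open>def(A): codimension of the row space of A in the space of finitely supported
  sequences, i.e. the least number of finitely supported sequences needed to extend
  the row space to all of fin_supp (infinity if no finite number suffices).\<close>
definition deficiency :: "cmat \<Rightarrow> enat" where
  "deficiency A = Inf {enat (card S) | S. finite S \<and> S \<subseteq> fin_supp \<and>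
                          lin_span (row_space A \<union> S) = fin_supp}"

end

theory Submission
  imports Defs
begin



lemma mv_eq:
  assumes "finite K" "{k. A n k \<noteq> 0} \<subseteq> K"
  shows "mat_vec A y n = (\<Sum>k\<in>K. A n k * y k)"
  unfolding mat_vec_def by (rule sum.mono_neutral_left) (use assms in auto)

lemma mm_supp:
  assumes "row_finite Q"
  shows "{k. mat_mult Q A n k \<noteq> 0} \<subseteq> (\<Union>j\<in>{j. Q n j \<noteq> 0}. {k. A j k \<noteq> 0})"
proof
  fix k assume "k \<in> {k. mat_mult Q A n k \<noteq> 0}"
  hence "(\<Sum>j\<in>{j. Q n j \<noteq> 0}. Q n j * A j k) \<noteq> 0" by (simp add: mat_mult_def)
  then obtain j where "j \<in> {j. Q n j \<noteq> 0}" "Q n j * A j k \<noteq> 0"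
    by (meson sum.neutral)
  thus "k \<in> (\<Union>j\<in>{j. Q n j \<noteq> 0}. {k. A j k \<noteq> 0})" by auto
qed

lemma mm_row_finite:
  assumes "row_finite Q" "row_finite A"
  shows "row_finite (mat_mult Q A)"
  unfolding row_finite_def
proof
  fix n
  have "finite (\<Union>j\<in>{j. Q n j \<noteq> 0}. {k. A j k \<noteq> 0})"
    using assms unfolding row_finite_def by auto
  thus "finite {k. mat_mult Q A n k \<noteq> 0}" using mm_supp[OF assms(1)] finite_subset by blast
qed

lemma assoc:
  assumes "row_finite Q" "row_finite A"
  shows "mat_vec Q (mat_vec A y) = mat_vec (mat_mult Q A) y"
proof
  fix n
  define S where "S = {j. Q n j \<noteq> 0}"
  define K where "K = (\<Union>j\<in>S. {k. A j k \<noteq> 0})"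
  have fS: "finite S" using assms(1) unfolding row_finite_def S_def by auto
  have fK: "finite K" using assms fS unfolding row_finite_def K_def by auto
  have "mat_vec Q (mat_vec A y) n = (\<Sum>j\<in>S. Q n j * (\<Sum>k\<in>K. A j k * y k))"
    unfolding mat_vec_def[of Q] S_def[symmetric]
    by (rule sum.cong[OF refl], subst mv_eq[OF fK]) (auto simp: K_def S_def)
  also have "\<dots> = (\<Sum>j\<in>S. \<Sum>k\<in>K. Q n j * A j k * y k)"
    by (simp add: sum_distrib_left mult.assoc)
  also have "\<dots> = (\<Sum>k\<in>K. \<Sum>j\<in>S. Q n j * A j k * y k)" by (rule sum.swap)
  also have "\<dots> = (\<Sum>k\<in>K. mat_mult Q A n k * y k)"
    by (simp add: mat_mult_def S_def sum_distrib_right)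
  also have "\<dots> = mat_vec (mat_mult Q A) y n"
    by (rule mv_eq[symmetric, OF fK]) (use mm_supp[OF assms(1)] in \<open>auto simp: K_def S_def\<close>)
  finally show "mat_vec Q (mat_vec A y) n = mat_vec (mat_mult Q A) y n" .
qed

lemma mv_id: "mat_vec id_mat x = x"
proof
  fix n
  have "{k. id_mat n k \<noteq> 0} = {n}" by (auto simp: id_mat_def)
  thus "mat_vec id_mat x n = x n" by (simp add: mat_vec_def id_mat_def)
qed

lemma equiv:
  assumes "row_finite A" "nonsingular Q"
  shows "(mat_vec A y = g) \<longleftrightarrow> (mat_vec (mat_mult Q A) y = mat_vec Q g)"
proof -
  obtain R where R: "row_finite R" "mat_mult R Q = id_mat" and Q: "row_finite Q"
    using assms(2) unfolding nonsingular_def by blast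
  have inv: "mat_vec R (mat_vec Q x) = x" for x
    using assoc[OF R(1) Q] R(2) mv_id by simp
  show ?thesis
  proof
    assume "mat_vec A y = g" thus "mat_vec (mat_mult Q A) y = mat_vec Q g"
      using assoc[OF Q assms(1)] by metis
  next
    assume "mat_vec (mat_mult Q A) y = mat_vec Q g"
    hence "mat_vec Q (mat_vec A y) = mat_vec Q g" using assoc[OF Q assms(1)] by simp
    hence "mat_vec R (mat_vec Q (mat_vec A y)) = mat_vec R (mat_vec Q g)" by simp
    thus "mat_vec A y = g" using inv by simp
  qed
qed




lemma qh_rf: "quasi_hermite H \<Longrightarrow> row_finite H" by (simp add: quasi_hermite_def)

lemma qh_row:
  assumes "quasi_hermite H" "j \<in> nonzero_rows H"
  shows "finite {k. H j k \<noteq> 0}" "{k. H j k \<noteq> 0} \<noteq> {}" "H j (seq_len (H j)) = 1"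
    "\<And>k. seq_len (H j) < k \<Longrightarrow> H j k = 0"
proof -
  show f: "finite {k. H j k \<noteq> 0}" using qh_rf[OF assms(1)] by (simp add: row_finite_def)
  show ne: "{k. H j k \<noteq> 0} \<noteq> {}" using assms(2) by (auto simp: nonzero_rows_def)
  show "H j (seq_len (H j)) = 1" using assms by (simp add: quasi_hermite_def)
  fix k assume "seq_len (H j) < k"
  thus "H j k = 0" using Max_ge[OF f, of k] unfolding seq_len_def by force
qed

lemma row_eval:
  assumes "quasi_hermite H" "j \<in> nonzero_rows H"
  shows "mat_vec H y j = y (seq_len (H j)) + (\<Sum>k<seq_len (H j). H j k * y k)"
proof -
  let ?l = "seq_len (H j)"
  have "mat_vec H y j = (\<Sum>k\<in>{..<Suc ?l}. H j k * y k)"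
    by (rule mv_eq) (use qh_row(4)[OF assms] in \<open>auto simp: not_less_eq[symmetric]\<close>)
  also have "\<dots> = y ?l + (\<Sum>k<?l. H j k * y k)"
    using qh_row(3)[OF assms] by simp
  finally show ?thesis .
qed

lemma zero_row: "w \<in> zero_rows H \<Longrightarrow> mat_vec H y w = 0"
  by (simp add: zero_rows_def mat_vec_def)

lemma char:
  assumes "quasi_hermite H"
  shows "mat_vec H y = b \<longleftrightarrow> (\<forall>w\<in>zero_rows H. b w = 0) \<and>
     (\<forall>j\<in>nonzero_rows H. y (seq_len (H j)) = b j - (\<Sum>k<seq_len (H j). H j k * y k))"
proof
  assume h: "mat_vec H y = b"
  show "(\<forall>w\<in>zero_rows H. b w = 0) \<and>
     (\<forall>j\<in>nonzero_rows H. y (seq_len (H j)) = b j - (\<Sum>k<seq_len (H j). H j k * y k))"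
    using zero_row[of _ H y] row_eval[OF assms, of _ y] h by (auto simp: algebra_simps)
next
  assume h: "(\<forall>w\<in>zero_rows H. b w = 0) \<and>
     (\<forall>j\<in>nonzero_rows H. y (seq_len (H j)) = b j - (\<Sum>k<seq_len (H j). H j k * y k))"
  show "mat_vec H y = b"
  proof
    fix n
    show "mat_vec H y n = b n"
    proof (cases "n \<in> zero_rows H")
      case True thus ?thesis using h zero_row by metis
    next
      case False
      hence "n \<in> nonzero_rows H" by (simp add: zero_rows_def nonzero_rows_def)
      thus ?thesis using h row_eval[OF assms, of n y] by auto
    qed
  qed
qed

lemma ell_inj:
  assumes "quasi_hermite H"
  shows "inj_on (\<lambda>j. seq_len (H j)) (nonzero_rows H)"
proof (rule inj_onI)
  fix a b assume "a \<in> nonzero_rows H" "b \<in> nonzero_rows H" "seq_len (H a) = seq_len (H b)"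
  thus "a = b" using assms unfolding quasi_hermite_def
    by (metis less_irrefl linorder_neqE_nat)
qed

lemma pivot_zero:
  assumes "quasi_hermite H" "j \<in> nonzero_rows H" "k < seq_len (H j)"
    "k \<in> (\<lambda>j. seq_len (H j)) ` nonzero_rows H"
  shows "H j k = 0"
proof -
  obtain j' where j': "j' \<in> nonzero_rows H" "k = seq_len (H j')" using assms(4) by auto
  hence "j' \<noteq> j" using assms(3) by auto
  thus ?thesis using assms(1) j' unfolding quasi_hermite_def by metis
qed

lemma sum_z:
  assumes "quasi_hermite H" "j \<in> nonzero_rows H"
    "\<forall>s. s \<notin> (\<lambda>j. seq_len (H j)) ` nonzero_rows H \<longrightarrow> y s = z s"
  shows "(\<Sum>k<seq_len (H j). H j k * y k) = (\<Sum>k<seq_len (H j). H j k * z k)"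
  by (rule sum.cong[OF refl]) (metis assms pivot_zero lessThan_iff mult_zero_left)

lemma solve:
  assumes qh: "quasi_hermite H" and b: "\<forall>w\<in>zero_rows H. b w = 0"
  shows "\<exists>!y. mat_vec H y = b \<and> (\<forall>s. s \<notin> (\<lambda>j. seq_len (H j)) ` nonzero_rows H \<longrightarrow> y s = z s)"
proof -
  let ?J = "nonzero_rows H" and ?l = "\<lambda>j. seq_len (H j)"
  let ?P = "?l ` ?J"
  define y where "y s = (if s \<in> ?P then (let j = (SOME j. j \<in> ?J \<and> ?l j = s) in
       b j - (\<Sum>k<s. H j k * z k)) else z s)" for s
  have yz: "\<forall>s. s \<notin> ?P \<longrightarrow> y s = z s" by (simp add: y_def)
  have yP: "y (?l j) = b j - (\<Sum>k<?l j. H j k * z k)" if "j \<in> ?J" for j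
  proof -
    have "(SOME j'. j' \<in> ?J \<and> ?l j' = ?l j) = j"
      by (rule some_equality) (use that ell_inj[OF qh] in \<open>auto dest: inj_onD\<close>)
    thus ?thesis using that by (simp add: y_def)
  qed
  have sol: "mat_vec H y = b"
    unfolding char[OF qh] using b yP sum_z[OF qh _ yz] by simp
  show ?thesis
  proof (rule ex1I[of _ y])
    show "mat_vec H y = b \<and> (\<forall>s. s \<notin> ?P \<longrightarrow> y s = z s)" using sol yz by blast
  next
    fix y' assume h: "mat_vec H y' = b \<and> (\<forall>s. s \<notin> ?P \<longrightarrow> y' s = z s)"
    show "y' = y"
    proof
      fix s show "y' s = y s"
      proof (cases "s \<in> ?P")
        case True
        then obtain j where j: "j \<in> ?J" "s = ?l j" by auto
        have "y' s = b j - (\<Sum>k<?l j. H j k * y' k)" using h j unfolding char[OF qh] by blast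
        also have "\<dots> = b j - (\<Sum>k<?l j. H j k * z k)" using sum_z[OF qh j(1)] h by simp
        finally show ?thesis using yP j by simp
      next
        case False thus ?thesis using h yz by simp
      qed
    qed
  qed
qed




lemma span_sub: "V \<subseteq> lin_span V"
proof
  fix x assume "x \<in> V"
  thus "x \<in> lin_span V" unfolding lin_span_def
    by (intro CollectI exI[of _ "{x}"] exI[of _ "\<lambda>_. 1"]) auto
qed

lemma span_intro:
  assumes "finite S" "\<forall>i\<in>S. f i \<in> V"
  shows "(\<lambda>k. \<Sum>i\<in>S. a i * f i k) \<in> lin_span V"
proof -
  define c where "c v = (\<Sum>i\<in>{i\<in>S. f i = v}. a i)" for v
  have "(\<lambda>k. \<Sum>i\<in>S. a i * f i k) = (\<lambda>k. \<Sum>v\<in>f ` S. c v * v k)"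
  proof
    fix k
    have "(\<Sum>i\<in>S. a i * f i k) = (\<Sum>v\<in>f ` S. \<Sum>i\<in>{i\<in>S. f i = v}. a i * f i k)"
      by (rule sum.image_gen[OF assms(1)])
    also have "\<dots> = (\<Sum>v\<in>f ` S. c v * v k)"
      unfolding c_def sum_distrib_right by (rule sum.cong[OF refl], rule sum.cong) auto
    finally show "(\<Sum>i\<in>S. a i * f i k) = (\<Sum>v\<in>f ` S. c v * v k)" .
  qed
  thus ?thesis unfolding lin_span_def using assms by blast
qed

lemma span_fin:
  assumes "V \<subseteq> fin_supp" shows "lin_span V \<subseteq> fin_supp"
proof
  fix x assume "x \<in> lin_span V"
  then obtain F c where F: "finite F" "F \<subseteq> V" "x = (\<lambda>k. \<Sum>v\<in>F. c v * v k)"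
    unfolding lin_span_def by blast
  have "{k. x k \<noteq> 0} \<subseteq> (\<Union>v\<in>F. {k. v k \<noteq> 0})"
  proof
    fix k assume "k \<in> {k. x k \<noteq> 0}"
    hence "(\<Sum>v\<in>F. c v * v k) \<noteq> 0" using F by simp
    then obtain v where "v \<in> F" "c v * v k \<noteq> 0" by (meson sum.neutral)
    thus "k \<in> (\<Union>v\<in>F. {k. v k \<noteq> 0})" by auto
  qed
  moreover have "finite (\<Union>v\<in>F. {k. v k \<noteq> 0})" using F assms by (auto simp: fin_supp_def)
  ultimately show "x \<in> fin_supp" by (simp add: fin_supp_def finite_subset)
qed

definition orth :: "cseq \<Rightarrow> cseq \<Rightarrow> bool" where
  "orth y x \<longleftrightarrow> x \<in> fin_supp \<and> (\<forall>K. finite K \<longrightarrow> {k. x k \<noteq> 0} \<subseteq> K \<longrightarrow> (\<Sum>k\<in>K. x k * y k) = 0)"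

lemma orth_span:
  assumes "V \<subseteq> {x. orth y x}" shows "lin_span V \<subseteq> {x. orth y x}"
proof
  fix x assume x: "x \<in> lin_span V"
  then obtain F c where F: "finite F" "F \<subseteq> V" "x = (\<lambda>k. \<Sum>v\<in>F. c v * v k)"
    unfolding lin_span_def by blast
  have Vf: "V \<subseteq> fin_supp" using assms by (auto simp: orth_def)
  have xf: "x \<in> fin_supp" using span_fin[OF Vf] x by blast
  have "(\<Sum>k\<in>K. x k * y k) = 0" if K: "finite K" "{k. x k \<noteq> 0} \<subseteq> K" for K
  proof -
    define K' where "K' = K \<union> (\<Union>v\<in>F. {k. v k \<noteq> 0})"
    have fK': "finite K'" using K F Vf by (auto simp: K'_def fin_supp_def)
    have "(\<Sum>k\<in>K. x k * y k) = (\<Sum>k\<in>K'. x k * y k)"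
      by (rule sum.mono_neutral_left) (use fK' K in \<open>auto simp: K'_def\<close>)
    also have "\<dots> = (\<Sum>k\<in>K'. \<Sum>v\<in>F. c v * (v k * y k))"
      by (simp add: F(3) sum_distrib_right mult.assoc)
    also have "\<dots> = (\<Sum>v\<in>F. c v * (\<Sum>k\<in>K'. v k * y k))"
      by (subst sum.swap) (simp add: sum_distrib_left)
    also have "\<dots> = 0"
    proof (rule sum.neutral, rule ballI)
      fix v assume v: "v \<in> F"
      hence "orth y v" using F assms by auto
      moreover have "{k. v k \<noteq> 0} \<subseteq> K'" using v by (auto simp: K'_def)
      ultimately show "c v * (\<Sum>k\<in>K'. v k * y k) = 0" using fK' by (simp add: orth_def)
    qed
    finally show ?thesis .
  qed
  thus "x \<in> {x. orth y x}" using xf by (simp add: orth_def)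
qed

lemma Inf_enat_zero:
  fixes S :: "enat set"
  assumes "Inf S = 0" shows "0 \<in> S"
proof (rule ccontr)
  assume "0 \<notin> S"
  hence "\<forall>x\<in>S. 1 \<le> x" by (metis ileI1 not_gr_zero one_eSuc)
  hence "1 \<le> Inf S" by (meson Inf_greatest)
  thus False using assms by simp
qed

lemma defic: "deficiency A > 0 \<longleftrightarrow> lin_span (row_space A) \<noteq> fin_supp"
proof
  assume "deficiency A > 0"
  show "lin_span (row_space A) \<noteq> fin_supp"
  proof
    assume h: "lin_span (row_space A) = fin_supp"
    have "enat (card ({}::cseq set)) \<in> {enat (card S) | S. finite S \<and> S \<subseteq> fin_supp \<and>
                          lin_span (row_space A \<union> S) = fin_supp}" using h
    proof -
      have "lin_span (row_space A \<union> {}) = fin_supp" using h by (simp only: Un_empty_right)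
      thus ?thesis by blast
    qed
    hence "deficiency A \<le> enat (card ({}::cseq set))" unfolding deficiency_def by (rule Inf_lower)
    hence "deficiency A \<le> 0" by (simp add: zero_enat_def)
    thus False using \<open>deficiency A > 0\<close> by simp
  qed
next
  assume h: "lin_span (row_space A) \<noteq> fin_supp"
  show "deficiency A > 0"
  proof (rule ccontr)
    assume "\<not> deficiency A > 0"
    hence "deficiency A = 0" by simp
    hence "0 \<in> {enat (card S) | S. finite S \<and> S \<subseteq> fin_supp \<and>
                          lin_span (row_space A \<union> S) = fin_supp}"
      unfolding deficiency_def by (rule Inf_enat_zero)
    then obtain S where "finite S" "card S = 0" "lin_span (row_space A \<union> S) = fin_supp"
      by (auto simp: zero_enat_def)
    hence "S = {}" by (meson card_0_eq)
    thus False using h \<open>lin_span (row_space A \<union> S) = fin_supp\<close> by (metis Un_empty_right)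
  qed
qed




definition ev :: "nat \<Rightarrow> cseq" where "ev s = (\<lambda>k. if k = s then 1 else 0)"

lemma nt_to_span:
  assumes "row_finite A" "y \<noteq> (\<lambda>_. 0)" "mat_vec A y = (\<lambda>_. 0)"
  shows "lin_span (row_space A) \<noteq> fin_supp"
proof
  assume h: "lin_span (row_space A) = fin_supp"
  have "range A \<subseteq> {x. orth y x}"
  proof
    fix x assume "x \<in> range A"
    then obtain i where i: "x = A i" by auto
    have f: "finite {k. A i k \<noteq> 0}" using assms(1) by (simp add: row_finite_def)
    have "(\<Sum>k\<in>K. A i k * y k) = 0" if "finite K" "{k. A i k \<noteq> 0} \<subseteq> K" for K
      using mv_eq[of K A i y] that assms(3) by metis
    thus "x \<in> {x. orth y x}" using f i by (simp add: orth_def fin_supp_def)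
  qed
  hence "lin_span (row_space A) \<subseteq> {x. orth y x}" unfolding row_space_def
    by (intro orth_span)
  hence o: "orth y (ev s)" for s using h by (auto simp: fin_supp_def ev_def)
  have "y s = 0" for s
  proof -
    have "{k. ev s k \<noteq> 0} \<subseteq> {s}" by (auto simp: ev_def)
    moreover have "finite {s}" by simp
    ultimately have "(\<Sum>k\<in>{s}. ev s k * y k) = 0"
      using o[of s, unfolded orth_def, THEN conjunct2, rule_format, of "{s}"] by simp
    thus ?thesis by (simp add: ev_def)
  qed
  thus False using assms(2) by auto
qed

lemma span_to_free:
  assumes "row_finite A" "nonsingular Q" "quasi_hermite (mat_mult Q A)"
    and "lin_span (row_space A) \<noteq> fin_supp"
  shows "\<exists>s. s \<notin> (\<lambda>j. seq_len (mat_mult Q A j)) ` nonzero_rows (mat_mult Q A)"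
proof (rule ccontr)
  let ?H = "mat_mult Q A"
  assume "\<not> ?thesis"
  hence all: "\<And>s. s \<in> (\<lambda>j. seq_len (?H j)) ` nonzero_rows ?H" by blast
  have Q: "row_finite Q" using assms(2) by (simp add: nonsingular_def)
  have Hrow: "?H j = ev (seq_len (?H j))" if j: "j \<in> nonzero_rows ?H" for j
  proof
    fix k
    consider "k < seq_len (?H j)" | "k = seq_len (?H j)" | "seq_len (?H j) < k" by linarith
    thus "?H j k = ev (seq_len (?H j)) k"
    proof cases
      case 1 thus ?thesis using pivot_zero[OF assms(3) j 1 all] by (simp add: ev_def)
    next
      case 2 thus ?thesis using qh_row(3)[OF assms(3) j] by (simp add: ev_def)
    next
      case 3 thus ?thesis using qh_row(4)[OF assms(3) j 3] by (simp add: ev_def)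
    qed
  qed
  have evin: "ev s \<in> lin_span (range A)" for s
  proof -
    obtain j where j: "j \<in> nonzero_rows ?H" "s = seq_len (?H j)" using all[of s] by blast
    have "?H j = (\<lambda>k. \<Sum>i\<in>{i. Q j i \<noteq> 0}. Q j i * A i k)" by (simp add: mat_mult_def)
    moreover have "\<dots> \<in> lin_span (range A)"
      by (rule span_intro) (use Q in \<open>auto simp: row_finite_def\<close>)
    ultimately show ?thesis using Hrow[OF j(1)] j(2) by simp
  qed
  have rf: "range A \<subseteq> fin_supp" using assms(1) by (auto simp: row_finite_def fin_supp_def)
  have "lin_span (row_space A) = fin_supp"
  proof
    show "lin_span (row_space A) \<subseteq> fin_supp" unfolding row_space_def
      by (rule span_fin, rule span_fin, rule rf)
  next
    show "fin_supp \<subseteq> lin_span (row_space A)"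
    proof
      fix x assume "x \<in> fin_supp"
      hence f: "finite {k. x k \<noteq> 0}" by (simp add: fin_supp_def)
      have "x = (\<lambda>k. \<Sum>s\<in>{k. x k \<noteq> 0}. x s * ev s k)"
      proof
        fix k
        show "x k = (\<Sum>s\<in>{k. x k \<noteq> 0}. x s * ev s k)"
        proof -
          have "(\<Sum>s\<in>{k. x k \<noteq> 0}. x s * ev s k) = (\<Sum>s\<in>{k. x k \<noteq> 0}. if s = k then x k else 0)"
            by (rule sum.cong) (auto simp: ev_def)
          also have "\<dots> = x k" using f by (simp add: sum.delta)
          finally show ?thesis by simp
        qed
      qed
      also have "\<dots> \<in> lin_span (row_space A)" unfolding row_space_def
        by (rule span_intro[OF f]) (use evin span_sub in blast)
      finally show "x \<in> lin_span (row_space A)" .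
    qed
  qed
  thus False using assms(4) by simp
qed

lemma free_to_nt:
  assumes "row_finite A" "nonsingular Q" "quasi_hermite (mat_mult Q A)"
    and "s \<notin> (\<lambda>j. seq_len (mat_mult Q A j)) ` nonzero_rows (mat_mult Q A)"
  shows "\<exists>y. y \<noteq> (\<lambda>_. 0) \<and> mat_vec A y = (\<lambda>_. 0)"
proof -
  obtain y where y: "mat_vec (mat_mult Q A) y = (\<lambda>_. 0)"
    "\<forall>t. t \<notin> (\<lambda>j. seq_len (mat_mult Q A j)) ` nonzero_rows (mat_mult Q A) \<longrightarrow> y t = ev s t"
    using solve[OF assms(3), of "\<lambda>_. 0" "ev s"] by auto
  have "mat_vec Q (\<lambda>_. 0) = (\<lambda>_. 0)" by (simp add: mat_vec_def)
  hence "mat_vec A y = (\<lambda>_. 0)" using equiv[OF assms(1,2)] y(1) by metis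
  moreover have "y s = 1" using y(2) assms(4) by (simp add: ev_def)
  ultimately show ?thesis by (metis zero_neq_one)
qed

theorem mainTheorem4:
  fixes A Q :: cmat and g :: cseq
  assumes "row_finite A"
    and "nonsingular Q"
    and "quasi_hermite (mat_mult Q A)"
  defines "H \<equiv> mat_mult Q A"
    and "W \<equiv> zero_rows (mat_mult Q A)"
    and "J \<equiv> nonzero_rows (mat_mult Q A)"
    and "kk \<equiv> mat_vec Q g"
  shows "((\<exists>y. mat_vec A y = g) \<longleftrightarrow> (\<forall>w\<in>W. kk w = 0))
    \<and> ((\<exists>y. mat_vec A y = g) \<longrightarrow>
         (\<forall>y. mat_vec A y = g \<longleftrightarrow>
              (\<forall>j\<in>J. y (seq_len (H j)) = kk j - (\<Sum>k<seq_len (H j). H j k * y k)))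
       \<and> (\<forall>j\<in>J. \<forall>k<seq_len (H j). k \<in> (\<lambda>j. seq_len (H j)) ` J \<longrightarrow> H j k = 0)
       \<and> (\<forall>z. \<exists>!y. mat_vec A y = g \<and>
              (\<forall>s. s \<notin> (\<lambda>j. seq_len (H j)) ` J \<longrightarrow> y s = z s)))
    \<and> ((\<exists>y. y \<noteq> (\<lambda>_. 0) \<and> mat_vec A y = (\<lambda>_. 0)) \<longleftrightarrow> deficiency A > 0)"
proof -
  have qh: "quasi_hermite H" using assms(3) by (simp add: H_def)
  have WH: "W = zero_rows H" by (simp add: W_def H_def)
  have JH: "J = nonzero_rows H" by (simp add: J_def H_def)
  have AH: "mat_vec A y = g \<longleftrightarrow> mat_vec H y = kk" for y
    unfolding H_def kk_def by (rule equiv[OF assms(1,2)])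
  have eq: "mat_vec A y = g \<longleftrightarrow> (\<forall>w\<in>W. kk w = 0) \<and>
     (\<forall>j\<in>J. y (seq_len (H j)) = kk j - (\<Sum>k<seq_len (H j). H j k * y k))" for y
    unfolding AH WH JH by (rule char[OF qh])
  have sol: "\<exists>!y. mat_vec A y = g \<and> (\<forall>s. s \<notin> (\<lambda>j. seq_len (H j)) ` J \<longrightarrow> y s = z s)"
    if "\<forall>w\<in>W. kk w = 0" for z
    unfolding AH JH by (rule solve[OF qh]) (use that WH in simp)
  have a: "(\<exists>y. mat_vec A y = g) \<longleftrightarrow> (\<forall>w\<in>W. kk w = 0)"
  proof
    assume "\<exists>y. mat_vec A y = g" thus "\<forall>w\<in>W. kk w = 0" using eq by blast
  next
    assume "\<forall>w\<in>W. kk w = 0"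
    from sol[OF this, of "\<lambda>_. 0"] show "\<exists>y. mat_vec A y = g" by blast
  qed
  have piv: "\<forall>j\<in>J. \<forall>k<seq_len (H j). k \<in> (\<lambda>j. seq_len (H j)) ` J \<longrightarrow> H j k = 0"
    unfolding JH using pivot_zero[OF qh] by blast
  have c: "(\<exists>y. y \<noteq> (\<lambda>_. 0) \<and> mat_vec A y = (\<lambda>_. 0)) \<longleftrightarrow> deficiency A > 0"
  proof
    assume "\<exists>y. y \<noteq> (\<lambda>_. 0) \<and> mat_vec A y = (\<lambda>_. 0)"
    then obtain y where "y \<noteq> (\<lambda>_. 0)" "mat_vec A y = (\<lambda>_. 0)" by blast
    from nt_to_span[OF assms(1) this] show "deficiency A > 0" using defic by blast
  next
    assume "deficiency A > 0"
    hence "lin_span (row_space A) \<noteq> fin_supp" using defic by blast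
    from span_to_free[OF assms(1,2,3) this] obtain s where
      "s \<notin> (\<lambda>j. seq_len (mat_mult Q A j)) ` nonzero_rows (mat_mult Q A)" by blast
    from free_to_nt[OF assms(1,2,3) this] show "\<exists>y. y \<noteq> (\<lambda>_. 0) \<and> mat_vec A y = (\<lambda>_. 0)" .
  qed
  have b: "(\<exists>y. mat_vec A y = g) \<longrightarrow>
         (\<forall>y. mat_vec A y = g \<longleftrightarrow>
              (\<forall>j\<in>J. y (seq_len (H j)) = kk j - (\<Sum>k<seq_len (H j). H j k * y k)))
       \<and> (\<forall>j\<in>J. \<forall>k<seq_len (H j). k \<in> (\<lambda>j. seq_len (H j)) ` J \<longrightarrow> H j k = 0)
       \<and> (\<forall>z. \<exists>!y. mat_vec A y = g \<and>
              (\<forall>s. s \<notin> (\<lambda>j. seq_len (H j)) ` J \<longrightarrow> y s = z s))"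
  proof
    assume "\<exists>y. mat_vec A y = g"
    hence W0: "\<forall>w\<in>W. kk w = 0" using a by blast
    show "(\<forall>y. mat_vec A y = g \<longleftrightarrow>
              (\<forall>j\<in>J. y (seq_len (H j)) = kk j - (\<Sum>k<seq_len (H j). H j k * y k)))
       \<and> (\<forall>j\<in>J. \<forall>k<seq_len (H j). k \<in> (\<lambda>j. seq_len (H j)) ` J \<longrightarrow> H j k = 0)
       \<and> (\<forall>z. \<exists>!y. mat_vec A y = g \<and>
              (\<forall>s. s \<notin> (\<lambda>j. seq_len (H j)) ` J \<longrightarrow> y s = z s))"
      using eq W0 piv sol[OF W0] by simp
  qed
  show ?thesis using a b c by (intro conjI)
qed


end
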